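(* For every integer $k\ge 2$, $$F_v(J_{2k+1},J_{2k+1};2k+1)\le 5\,F_v(J_{k+1},J_{k+1};k+1).$$
   Context: All graphs are finite and simple. $J_n$ denotes the complete graph $K_n$ with one edge removed. "A graph $F$ contains $H$" means $F$ has a (not necessarily induced) subgraph isomorphic to $H$. $G\rightarrow(H_1,\dots,H_r)^v$ means: for every partition $V(G)=X_1\cup\dots\cup X_r$ there is $i$ such that the subgraph induced by $X_i$ contains $H_i$. $\mathcal{F}_v(H_1,\dots,H_r;k)$ is the set of $K_k$-free graphs $G$ with $G\rightarrow(H_1,\dots,H_r)^v$, and $F_v(H_1,\dots,H_r;k)$ is the minimum number of vertices of a graph in this set. *)

theory Defs
  imports Main
begin

type_synonym 'a graph = "'a set \<times> 'a set set"

definition is_graph :: "'a graph \<Rightarrow> bool" where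
  "is_graph G \<longleftrightarrow> finite (fst G) \<and>
     (\<forall>e\<in>snd G. \<exists>u v. u \<in> fst G \<and> v \<in> fst G \<and> u \<noteq> v \<and> e = {u, v})"

definition contains :: "'a graph \<Rightarrow> 'b graph \<Rightarrow> bool" where
  "contains G H \<longleftrightarrow> (\<exists>f. inj_on f (fst H) \<and> f ` fst H \<subseteq> fst G \<and>
      (\<forall>u v. {u, v} \<in> snd H \<longrightarrow> {f u, f v} \<in> snd G))"

definition induced :: "'a graph \<Rightarrow> 'a set \<Rightarrow> 'a graph" where
  "induced G X = (X, {e \<in> snd G. e \<subseteq> X})"

definition complete_graph :: "nat \<Rightarrow> nat graph" where
  "complete_graph n = ({0..<n}, {{i, j} | i j. i < n \<and> j < n \<and> i \<noteq> j})"

definition J_graph :: "nat \<Rightarrow> nat graph" where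
  "J_graph n = ({0..<n}, {{i, j} | i j. i < j \<and> j < n \<and> (i, j) \<noteq> (0, 1)})"

definition vertex_arrow2 :: "'a graph \<Rightarrow> 'b graph \<Rightarrow> 'c graph \<Rightarrow> bool" where
  "vertex_arrow2 G H1 H2 \<longleftrightarrow>
     (\<forall>X1 X2. X1 \<union> X2 = fst G \<and> X1 \<inter> X2 = {} \<longrightarrow>
        contains (induced G X1) H1 \<or> contains (induced G X2) H2)"

text \<open>The family F_v(H1,H2;k) (graphs taken on natural-number vertices, which is no
loss of generality up to isomorphism) and its minimum order F_v(H1,H2;k).\<close>
definition Fv_family :: "'b graph \<Rightarrow> 'c graph \<Rightarrow> nat \<Rightarrow> nat graph set" where
  "Fv_family H1 H2 k = {G. is_graph G \<and> \<not> contains G (complete_graph k) \<and> vertex_arrow2 G H1 H2}"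

definition Fv :: "'b graph \<Rightarrow> 'c graph \<Rightarrow> nat \<Rightarrow> nat" where
  "Fv H1 H2 k = (LEAST n. \<exists>G \<in> Fv_family H1 H2 k. card (fst G) = n)"

end

theory Submission
  imports Defs
begin

definition blow :: "nat graph \<Rightarrow> nat graph" where
 "blow G = ((\<lambda>(v,i). 5*v+i) ` (fst G \<times> {0..<5}),
   {{5*a+i, 5*b+i} | a b i. i<5 \<and> {a,b} \<in> snd G} \<union>
   {{5*a+i, 5*b+ Suc i mod 5} | a b i. i<5 \<and> a \<in> fst G \<and> b \<in> fst G})"

lemma blow_V: "x \<in> fst (blow G) \<longleftrightarrow> x div 5 \<in> fst G"
proof
  assume "x \<in> fst (blow G)"
  then obtain v i where "v \<in> fst G" "i < (5::nat)" "x = 5*v+i" by (auto simp: blow_def)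
  then show "x div 5 \<in> fst G" by simp
next
  assume "x div 5 \<in> fst G"
  moreover have "x = 5*(x div 5) + x mod 5" by simp
  ultimately show "x \<in> fst (blow G)" unfolding blow_def
    by (auto intro!: image_eqI[where x="(x div 5, x mod 5)"])
qed

lemma blow_V2: "v \<in> fst G \<Longrightarrow> i < 5 \<Longrightarrow> 5*v+i \<in> fst (blow G)"
  by (simp add: blow_V)

lemma blow_E1: "{a,b} \<in> snd G \<Longrightarrow> i < 5 \<Longrightarrow> {5*a+i, 5*b+i} \<in> snd (blow G)"
  unfolding blow_def by auto

lemma blow_E2: "a \<in> fst G \<Longrightarrow> b \<in> fst G \<Longrightarrow> i < 5 \<Longrightarrow> {5*a+i, 5*b+Suc i mod 5} \<in> snd (blow G)"
  unfolding blow_def snd_conv by blast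

lemma blow_E_char:
  assumes "{x,y} \<in> snd (blow G)"
  shows "(x mod 5 = y mod 5 \<and> {x div 5, y div 5} \<in> snd G) \<or> y mod 5 = Suc (x mod 5) mod 5
     \<or> x mod 5 = Suc (y mod 5) mod 5"
proof -
  from assms consider (a) a b i where "i<5" "{a,b} \<in> snd G" "{x,y} = {5*a+i, 5*b+i}"
    | (b) a b i where "i<(5::nat)" "{x,y} = {5*a+i, 5*b+Suc i mod 5}"
    unfolding blow_def by auto
  then show ?thesis
  proof cases
    case a
    then show ?thesis by (auto simp: doubleton_eq_iff insert_commute)
  next
    case b
    then show ?thesis by (auto simp: doubleton_eq_iff)
  qed
qed

lemma clique_contains:
  assumes "finite S" "m \<le> card S" "S \<subseteq> fst G"
    "\<forall>a\<in>S. \<forall>b\<in>S. a \<noteq> b \<longrightarrow> {a,b} \<in> snd G"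
  shows "contains G (complete_graph m)"
proof -
  obtain T where T: "T \<subseteq> S" "card T = m" "finite T"
    using obtain_subset_with_card_n[OF assms(2)] by blast
  obtain h where h: "bij_betw h {0..<m} T" using ex_bij_betw_nat_finite[OF T(3)] T(2) by auto
  have inj: "inj_on h {0..<m}" and im: "h ` {0..<m} = T" using h by (auto simp: bij_betw_def)
  show ?thesis unfolding contains_def
  proof (intro exI conjI allI impI)
    show "inj_on h (fst (complete_graph m))" using inj by (simp add: complete_graph_def)
    show "h ` fst (complete_graph m) \<subseteq> fst G" using im T(1) assms(3) by (auto simp: complete_graph_def)
    fix u v assume "{u,v} \<in> snd (complete_graph m)"
    then obtain i j where "{u,v} = {i,j}" "i<m" "j<m" "i\<noteq>j" by (auto simp: complete_graph_def)
    then have uv: "u < m" "v < m" "u \<noteq> v" by (auto simp: doubleton_eq_iff)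
    then have "h u \<noteq> h v" "h u \<in> S" "h v \<in> S" using inj im T(1)
      by (auto simp: inj_on_def)
    then show "{h u, h v} \<in> snd G" using assms(4) by blast
  qed
qed

lemma five: "(x::nat) < 5 \<Longrightarrow> x = 0 \<or> x = 1 \<or> x = 2 \<or> x = 3 \<or> x = 4" by auto
lemma five_a: "(x::nat) < 5 \<Longrightarrow> y < 5 \<Longrightarrow> x = y \<or> y = Suc x mod 5 \<or> x = Suc y mod 5 \<Longrightarrow> y = x \<or> y = Suc x mod 5 \<or> y = (x+4) mod 5"
  apply (drule five)+ by auto
lemma five_b: "(x::nat) < 5 \<Longrightarrow> Suc x mod 5 \<noteq> (x+4) mod 5" by (drule five) auto
lemma five_c: "(x::nat) < 5 \<Longrightarrow> Suc x mod 5 = Suc ((x+4) mod 5) mod 5 \<or> (x+4) mod 5 = Suc (Suc x mod 5) mod 5 \<Longrightarrow> False" by (drule five) auto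

lemma five_d: "Suc ((x::nat) mod 5) mod 5 \<noteq> x mod 5"
proof -
  have "x mod 5 < 5" by simp
  then show ?thesis by (drule_tac five) auto
qed

lemma card_L:
  fixes L :: "nat set"
  assumes "L \<subseteq> {0..<5}" "\<forall>x\<in>L. \<forall>y\<in>L. x \<noteq> y \<longrightarrow> y = Suc x mod 5 \<or> x = Suc y mod 5"
  shows "card L \<le> 2"
proof (cases "L = {}")
  case True then show ?thesis by simp
next
  case False
  then obtain x where x: "x \<in> L" by blast
  have x5: "x < 5" using x assms(1) by auto
  have sub: "L \<subseteq> {x, Suc x mod 5, (x+4) mod 5}"
  proof
    fix y assume "y \<in> L"
    then have "y < 5" "x = y \<or> y = Suc x mod 5 \<or> x = Suc y mod 5" using assms x by auto
    then have "y = x \<or> y = Suc x mod 5 \<or> y = (x+4) mod 5" using x5 five_a by blast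
    then show "y \<in> {x, Suc x mod 5, (x+4) mod 5}" by blast
  qed
  have "\<not> (Suc x mod 5 \<in> L \<and> (x+4) mod 5 \<in> L)"
  proof
    assume "Suc x mod 5 \<in> L \<and> (x+4) mod 5 \<in> L"
    then have "Suc x mod 5 = Suc ((x+4) mod 5) mod 5 \<or> (x+4) mod 5 = Suc (Suc x mod 5) mod 5"
    proof -
      have "Suc x mod 5 \<noteq> (x+4) mod 5" using x5 five_b by blast
      then show ?thesis using assms(2) \<open>Suc x mod 5 \<in> L \<and> (x+4) mod 5 \<in> L\<close> by blast
    qed
    then show False using x5 five_c by blast
  qed
  then have "L \<subseteq> {x, Suc x mod 5} \<or> L \<subseteq> {x, (x+4) mod 5}" using sub by blast
  then show ?thesis
  proof
    assume "L \<subseteq> {x, Suc x mod 5}"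
    then have "card L \<le> card {x, Suc x mod 5}" by (intro card_mono) auto
    also have "\<dots> \<le> 2" by (simp add: card_insert_le_m1)
    finally show ?thesis .
  next
    assume "L \<subseteq> {x, (x+4) mod 5}"
    then have "card L \<le> card {x, (x+4) mod 5}" by (intro card_mono) auto
    also have "\<dots> \<le> 2" by (simp add: card_insert_le_m1)
    finally show ?thesis .
  qed
qed

lemma blow_free:
  assumes "\<not> contains G (complete_graph (k+1))"
  shows "\<not> contains (blow G) (complete_graph (2*k+1))"
proof
  assume "contains (blow G) (complete_graph (2*k+1))"
  then obtain g where inj: "inj_on g {0..<2*k+1}" and im: "g ` {0..<2*k+1} \<subseteq> fst (blow G)"
    and ed: "\<forall>u v. {u,v} \<in> snd (complete_graph (2*k+1)) \<longrightarrow> {g u, g v} \<in> snd (blow G)"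
    unfolding contains_def by (auto simp: complete_graph_def)
  define A where "A = {0..<2*k+1}"
  have edA: "{g u, g v} \<in> snd (blow G)" if "u \<in> A" "v \<in> A" "u \<noteq> v" for u v
  proof -
    have "{u,v} \<in> snd (complete_graph (2*k+1))" unfolding complete_graph_def snd_conv
      using that unfolding A_def by auto
    then show ?thesis using ed by blast
  qed
  define T where "T i = {t\<in>A. g t mod 5 = i}" for i
  define L where "L = (\<lambda>t. g t mod 5) ` A"
  have fib: "card (T i) \<le> k" for i
  proof (rule ccontr)
    assume "\<not> card (T i) \<le> k"
    then have c: "k+1 \<le> card (T i)" by simp
    let ?S = "(\<lambda>t. g t div 5) ` T i"
    have injT: "inj_on (\<lambda>t. g t div 5) (T i)"
    proof (rule inj_onI)
      fix s t assume "s \<in> T i" "t \<in> T i" "g s div 5 = g t div 5"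
      moreover have "g s mod 5 = g t mod 5" using \<open>s \<in> T i\<close> \<open>t \<in> T i\<close> unfolding T_def by simp
      moreover have "g s = 5*(g s div 5) + g s mod 5" "g t = 5*(g t div 5) + g t mod 5" by simp_all
      ultimately have "g s = g t" by metis
      then show "s = t" using inj \<open>s \<in> T i\<close> \<open>t \<in> T i\<close> unfolding T_def A_def inj_on_def by auto
    qed
    have fin: "finite (T i)" unfolding T_def A_def by auto
    have "contains G (complete_graph (k+1))"
    proof (rule clique_contains[of ?S])
      show "finite ?S" using fin by auto
      show "k+1 \<le> card ?S" using c card_image[OF injT] by simp
      show "?S \<subseteq> fst G" using im unfolding T_def A_def by (auto simp: blow_V image_subset_iff)
      show "\<forall>a\<in>?S. \<forall>b\<in>?S. a \<noteq> b \<longrightarrow> {a, b} \<in> snd G"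
      proof (intro ballI impI)
        fix a b assume "a \<in> ?S" "b \<in> ?S" "a \<noteq> b"
        then obtain s t where st: "s \<in> T i" "t \<in> T i" "a = g s div 5" "b = g t div 5" by auto
        with \<open>a \<noteq> b\<close> have "s \<noteq> t" by auto
        then have "{g s, g t} \<in> snd (blow G)" using edA st unfolding T_def by auto
        from blow_E_char[OF this] have
          "(g s mod 5 = g t mod 5 \<and> {g s div 5, g t div 5} \<in> snd G) \<or> g t mod 5 = Suc (g s mod 5) mod 5
             \<or> g s mod 5 = Suc (g t mod 5) mod 5" .
        moreover have "g s mod 5 = i" "g t mod 5 = i" using st unfolding T_def by auto
        moreover have "Suc i mod 5 \<noteq> i" using \<open>g s mod 5 = i\<close> using five_d by auto
        ultimately show "{a,b} \<in> snd G" using st by auto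
      qed
    qed
    with assms show False by simp
  qed
  have "card L \<le> 2"
  proof (rule card_L)
    show "L \<subseteq> {0..<5}" unfolding L_def by auto
    show "\<forall>x\<in>L. \<forall>y\<in>L. x \<noteq> y \<longrightarrow> y = Suc x mod 5 \<or> x = Suc y mod 5"
    proof (intro ballI impI)
      fix x y assume "x \<in> L" "y \<in> L" "x \<noteq> y"
      then obtain s t where st: "s \<in> A" "t \<in> A" "x = g s mod 5" "y = g t mod 5" unfolding L_def by auto
      with \<open>x \<noteq> y\<close> have "s \<noteq> t" by auto
      then have "{g s, g t} \<in> snd (blow G)" using edA st by auto
      from blow_E_char[OF this] show "y = Suc x mod 5 \<or> x = Suc y mod 5" using st \<open>x\<noteq>y\<close> by auto
    qed
  qed
  have "A = (\<Union>i\<in>L. T i)" unfolding A_def L_def T_def by auto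
  then have "card A \<le> (\<Sum>i\<in>L. card (T i))" using card_UN_le[of L T] unfolding L_def A_def by auto
  also have "\<dots> \<le> card L * k" using sum_bounded_above[of L "\<lambda>i. card (T i)" k] fib by auto
  also have "\<dots> \<le> 2 * k" using \<open>card L \<le> 2\<close> by simp
  finally show False unfolding A_def by simp
qed

lemma blow_is_graph:
  assumes "is_graph G"
  shows "is_graph (blow G)"
  unfolding is_graph_def
proof (intro conjI ballI)
  show "finite (fst (blow G))" using assms unfolding is_graph_def blow_def by auto
  fix e assume "e \<in> snd (blow G)"
  then consider (a) a b i where "i<(5::nat)" "{a,b} \<in> snd G" "e = {5*a+i, 5*b+i}"
    | (b) a b i where "i<(5::nat)" "a \<in> fst G" "b \<in> fst G" "e = {5*a+i, 5*b+Suc i mod 5}"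
    unfolding blow_def by auto
  then show "\<exists>u v. u \<in> fst (blow G) \<and> v \<in> fst (blow G) \<and> u \<noteq> v \<and> e = {u, v}"
  proof cases
    case a
    from assms a(2) obtain u v where "u \<in> fst G" "v \<in> fst G" "u \<noteq> v" "{a,b} = {u,v}"
      unfolding is_graph_def by blast
    then have "a \<in> fst G" "b \<in> fst G" "a \<noteq> b" by (auto simp: doubleton_eq_iff)
    then show ?thesis using a by (intro exI[of _ "5*a+i"] exI[of _ "5*b+i"]) (auto intro: blow_V2)
  next
    case b
    have "(5*a+i) mod 5 \<noteq> (5*b+Suc i mod 5) mod 5" using b(1) five_d[of i] by simp
    then have "5*a+i \<noteq> 5*b+Suc i mod 5" by metis
    then show ?thesis using b by (intro exI[of _ "5*a+i"] exI[of _ "5*b+Suc i mod 5"]) (auto intro: blow_V2)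
  qed
qed

lemma J_edge: "i < j \<Longrightarrow> j < n \<Longrightarrow> (i,j) \<noteq> (0,1) \<Longrightarrow> {i,j} \<in> snd (J_graph n)"
  unfolding J_graph_def snd_conv by blast

lemma combine:
  assumes i5: "i < 5" and jdef: "j = Suc i mod 5"
    and c1: "contains (induced G {v\<in>fst G. 5*v+i \<in> Y}) (J_graph (k+1))"
    and c2: "contains (induced G {v\<in>fst G. 5*v+j \<in> Y}) (J_graph (k+1))"
  shows "contains (induced (blow G) Y) (J_graph (2*k+1))"
proof -
  obtain f1 where f1i: "inj_on f1 {0..<k+1}" and f1m: "f1 ` {0..<k+1} \<subseteq> {v\<in>fst G. 5*v+i \<in> Y}"
    and f1e: "\<forall>u v. {u,v} \<in> snd (J_graph (k+1)) \<longrightarrow> {f1 u, f1 v} \<in> {e\<in>snd G. e \<subseteq> {v\<in>fst G. 5*v+i \<in> Y}}"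
    using c1 unfolding contains_def induced_def J_graph_def by auto
  obtain f2 where f2i: "inj_on f2 {0..<k+1}" and f2m: "f2 ` {0..<k+1} \<subseteq> {v\<in>fst G. 5*v+j \<in> Y}"
    and f2e: "\<forall>u v. {u,v} \<in> snd (J_graph (k+1)) \<longrightarrow> {f2 u, f2 v} \<in> {e\<in>snd G. e \<subseteq> {v\<in>fst G. 5*v+j \<in> Y}}"
    using c2 unfolding contains_def induced_def J_graph_def by auto
  have j5: "j < 5" and ij: "i \<noteq> j" using jdef five_d[of i] i5 by auto
  define g where "g t = (if t \<le> k then 5 * f1 t + i else 5 * f2 (t-k) + j)" for t
  have gm: "g t mod 5 = (if t \<le> k then i else j)" for t using i5 j5 unfolding g_def by auto
  have gY: "g t \<in> Y" if "t < 2*k+1" for t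
    using that f1m f2m unfolding g_def by (auto simp: image_subset_iff)
  have gV: "g t \<in> fst (blow G)" if "t < 2*k+1" for t
    using that f1m f2m i5 j5 unfolding g_def by (auto simp: image_subset_iff intro!: blow_V2)
  have ginj: "inj_on g {0..<2*k+1}"
  proof (rule inj_onI)
    fix s t assume s: "s \<in> {0..<2*k+1}" and t: "t \<in> {0..<2*k+1}" and e: "g s = g t"
    then have "(s \<le> k) = (t \<le> k)" using gm[of s] gm[of t] ij by (auto split: if_splits)
    then show "s = t"
    proof (cases "s \<le> k")
      case True
      then have "f1 s = f1 t" using e \<open>(s \<le> k) = (t \<le> k)\<close> unfolding g_def by auto
      then show ?thesis using f1i True \<open>(s \<le> k) = (t \<le> k)\<close> unfolding inj_on_def by auto
    next
      case False
      then have "f2 (s-k) = f2 (t-k)" using e \<open>(s \<le> k) = (t \<le> k)\<close> unfolding g_def by auto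
      moreover have "s-k \<in> {0..<k+1}" "t-k \<in> {0..<k+1}" using s t by auto
      ultimately have "s-k = t-k" using f2i unfolding inj_on_def by blast
      then show ?thesis using False \<open>(s \<le> k) = (t \<le> k)\<close> by auto
    qed
  qed
  have gE: "{g a, g b} \<in> snd (blow G)" if ab: "a < b" "b < 2*k+1" "(a,b) \<noteq> (0,1)" for a b
  proof (cases "b \<le> k")
    case True
    then have "{a,b} \<in> snd (J_graph (k+1))" using ab by (intro J_edge) auto
    then have "{f1 a, f1 b} \<in> snd G" using f1e by blast
    then show ?thesis using True ab i5 unfolding g_def by (auto intro: blow_E1)
  next
    case bk: False
    show ?thesis
    proof (cases "a \<le> k")
      case True
      have "f1 a \<in> fst G" "f2 (b-k) \<in> fst G" using f1m f2m True bk ab by (auto simp: image_subset_iff)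
      then show ?thesis using True bk i5 jdef unfolding g_def by (auto intro: blow_E2)
    next
      case False
      then have "{a-k,b-k} \<in> snd (J_graph (k+1))" using ab by (intro J_edge) auto
      then have "{f2 (a-k), f2 (b-k)} \<in> snd G" using f2e by blast
      then show ?thesis using False bk j5 unfolding g_def by (auto intro: blow_E1)
    qed
  qed
  show ?thesis unfolding contains_def
  proof (intro exI[of _ g] conjI allI impI)
    show "inj_on g (fst (J_graph (2*k+1)))" using ginj by (simp add: J_graph_def)
    show "g ` fst (J_graph (2 * k + 1)) \<subseteq> fst (induced (blow G) Y)"
      using gY by (auto simp: J_graph_def induced_def)
    fix u v assume "{u,v} \<in> snd (J_graph (2*k+1))"
    then obtain a b where ab: "{u,v} = {a,b}" "a < b" "b < 2*k+1" "(a,b) \<noteq> (0,1)"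
      unfolding J_graph_def by auto
    have "{g a, g b} \<in> snd (blow G)" using gE ab by auto
    moreover have "{g a, g b} \<subseteq> Y" using gY ab by auto
    moreover have "{g u, g v} = {g a, g b}" using ab(1) by (auto simp: doubleton_eq_iff)
    ultimately show "{g u, g v} \<in> snd (induced (blow G) Y)" by (simp add: induced_def)
  qed
qed

lemma odd5: fixes c :: "nat \<Rightarrow> bool" assumes h: "\<And>i::nat. i < 5 \<Longrightarrow> c i \<noteq> c (Suc i mod 5)" shows False
proof -
  have e: "Suc 0 mod 5 = 1" "Suc 1 mod 5 = 2" "Suc 2 mod 5 = 3" "Suc 3 mod 5 = 4" "Suc 4 mod 5 = (0::nat)"
    by simp_all
  have h0: "c 0 \<noteq> c (Suc 0 mod 5)" by (rule h) simp
  have h1: "c 1 \<noteq> c (Suc 1 mod 5)" by (rule h) simp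
  have h2: "c 2 \<noteq> c (Suc 2 mod 5)" by (rule h) simp
  have h3: "c 3 \<noteq> c (Suc 3 mod 5)" by (rule h) simp
  have h4: "c 4 \<noteq> c (Suc 4 mod 5)" by (rule h) simp
  have "c 0 \<noteq> c 1" "c 1 \<noteq> c 2" "c 2 \<noteq> c 3" "c 3 \<noteq> c 4" "c 4 \<noteq> c 0"
    using h0 h1 h2 h3 h4 unfolding e by -
  then show False by (cases "c 0") auto
qed

lemma blow_arrow:
  assumes arr: "vertex_arrow2 G (J_graph (k+1)) (J_graph (k+1))"
  shows "vertex_arrow2 (blow G) (J_graph (2*k+1)) (J_graph (2*k+1))"
  unfolding vertex_arrow2_def
proof (intro allI impI)
  fix X1 X2 assume X: "X1 \<union> X2 = fst (blow G) \<and> X1 \<inter> X2 = {}"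
  define A where "A i = {v\<in>fst G. 5*v+i \<in> X1}" for i
  define B where "B i = {v\<in>fst G. 5*v+i \<in> X2}" for i
  define c where "c i = contains (induced G (A i)) (J_graph (k+1))" for i
  have cb: "\<not> c i \<Longrightarrow> contains (induced G (B i)) (J_graph (k+1))" if "i < 5" for i
  proof -
    have "A i \<union> B i = fst G" using X blow_V2[OF _ that, of _ G] unfolding A_def B_def by blast
    moreover have "A i \<inter> B i = {}" using X unfolding A_def B_def by blast
    ultimately show "\<not> c i \<Longrightarrow> contains (induced G (B i)) (J_graph (k+1))"
      using arr unfolding vertex_arrow2_def c_def by blast
  qed
  have "\<exists>i<5. c i = c (Suc i mod 5)"
  proof (rule ccontr)
    assume "\<not> ?thesis"
    then have h: "\<And>i. i < 5 \<Longrightarrow> c i \<noteq> c (Suc i mod 5)" by blast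
    show False using odd5[of c, OF h] .
  qed
  then obtain i where i5: "i < 5" and ci: "c i = c (Suc i mod 5)" by blast
  show "contains (induced (blow G) X1) (J_graph (2*k+1)) \<or> contains (induced (blow G) X2) (J_graph (2*k+1))"
  proof (cases "c i")
    case True
    then have "contains (induced (blow G) X1) (J_graph (2*k+1))"
      using combine[OF i5 refl, of G X1 k] ci unfolding c_def A_def by auto
    then show ?thesis ..
  next
    case False
    have "Suc i mod 5 < 5" by simp
    then have "contains (induced (blow G) X2) (J_graph (2*k+1))"
      using combine[OF i5 refl, of G X2 k] ci False cb[OF i5] cb[of "Suc i mod 5"] unfolding B_def by auto
    then show ?thesis ..
  qed
qed

lemma blow_card: "card (fst (blow G)) = 5 * card (fst G)"
proof -
  have aux: "a = b \<and> i = j" if "i < 5" "j < 5" "5*a+i = 5*b+j" for a i b j :: nat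
  proof -
    from that have "(5*a+i) mod 5 = (5*b+j) mod 5" by simp
    then have "i = j" using \<open>i < 5\<close> \<open>j < 5\<close> by simp
    then show "a = b \<and> i = j" using \<open>5*a+i = 5*b+j\<close> by simp
  qed
  have "inj_on (\<lambda>(v,i). 5*v+i) (fst G \<times> {0..<(5::nat)})"
    unfolding inj_on_def using aux by auto
  then show ?thesis unfolding blow_def by (simp add: card_image card_cartesian_product)
qed

theorem mainTheorem3:
  fixes k :: nat
  assumes "k \<ge> 2"
    and "Fv_family (J_graph (k+1)) (J_graph (k+1)) (k+1) \<noteq> {}"
  shows "Fv_family (J_graph (2*k+1)) (J_graph (2*k+1)) (2*k+1) \<noteq> {} \<and>
         Fv (J_graph (2*k+1)) (J_graph (2*k+1)) (2*k+1) \<le> 5 * Fv (J_graph (k+1)) (J_graph (k+1)) (k+1)"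
proof -
  let ?P = "\<lambda>n. \<exists>G \<in> Fv_family (J_graph (k+1)) (J_graph (k+1)) (k+1). card (fst G) = n"
  from assms(2) obtain G0 where "G0 \<in> Fv_family (J_graph (k+1)) (J_graph (k+1)) (k+1)" by blast
  then have "\<exists>n. ?P n" by blast
  from LeastI_ex[of ?P, OF this] obtain G where
    G: "G \<in> Fv_family (J_graph (k+1)) (J_graph (k+1)) (k+1)"
    and cG: "card (fst G) = Fv (J_graph (k+1)) (J_graph (k+1)) (k+1)"
    unfolding Fv_def by blast
  have B: "blow G \<in> Fv_family (J_graph (2*k+1)) (J_graph (2*k+1)) (2*k+1)"
    using G blow_is_graph blow_free blow_arrow unfolding Fv_family_def by auto
  have "Fv (J_graph (2*k+1)) (J_graph (2*k+1)) (2*k+1) \<le> card (fst (blow G))"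
    unfolding Fv_def using B by (intro Least_le) blast
  then show ?thesis using B cG blow_card[of G] by auto
qed

end
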